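(* Let $0<\varepsilon_0\le1$, $N\ge1$, and for $m=1,\dots,N$ let $A_m$ be an $(h_{A_m},k_{A_m},\delta_{A_m},G_{A_m},\varepsilon_{A_m})$-expansion with coefficients $a_{A_m,l}$, $h_{A_m}\le l\le k_{A_m}$ (set $a_{A_m,l}=0$ outside this range). Then for every $n=1,\dots,N$: (i) $B_n=A_1+\cdots+A_n$ is an $(h_{B_n},k_{B_n},\delta_{B_n},G_{B_n},\varepsilon_{B_n})$-expansion with $h_{B_n}=\min_{m\le n}h_{A_m}$, $k_{B_n}=\min_{m\le n}k_{A_m}$, coefficients $b_{l,n}=\sum_{m=1}^n a_{A_m,l}$, $\delta_{B_n}=\min_{m\in\mathbb{K}_n}\delta_{A_m}\ \ (\ge\min_{1\le m\le n}\delta_{A_m})$ where $\mathbb{K}_n=\{m\le n: k_{A_m}=\min(k_{A_1},\dots,k_{A_n})\}$, $\varepsilon_{B_n}=\min(\varepsilon_{A_1},\dots,\varepsilon_{A_n})$, and $G_{B_n}=\sum_{1\le i\le n}\Big(G_{A_i}\varepsilon_{B_n}^{k_{A_i}+\delta_{A_i}-k_{B_n}-\delta_{B_n}}+\sum_{k_{B_n}<j\le k_{A_i}}|a_{A_i,j}|\varepsilon_{B_n}^{j-k_{B_n}-\delta_{B_n}}\Big)$. (ii) $C_n=A_1\times\cdots\times A_n$ is an $(h_{C_n},k_{C_n},\delta_{C_n},G_{C_n},\varepsilon_{C_n})$-expansion with $h_{C_n}=\sum_{m\le n}h_{A_m}$, $k_{C_n}=\min_{1\le l\le n}\big(k_{A_l}+\sum_{r\le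 n,r\ne l}h_{A_r}\big)$, coefficients $c_{r,n}=\sum_{l_1+\cdots+l_n=r,\ h_{A_i}\le l_i\le k_{A_i}}\prod_{i=1}^n a_{A_i,l_i}$, $\delta_{C_n}=\min_{m\in\mathbb{L}_n}\delta_{A_m}\ (\ge\min_{1\le m\le n}\delta_{A_m})$ where $\mathbb{L}_n=\{m\le n: k_{A_m}+\sum_{r\le n,r\ne m}h_{A_r}=k_{C_n}\}$, $\varepsilon_{C_n}=\min_{i\le n}\varepsilon_{A_i}$, and $G_{C_n}=\sum_{k_{C_n}<l_1+\cdots+l_n,\ h_{A_i}\le l_i\le k_{A_i}}\prod_{i=1}^n|a_{A_i,l_i}|\,\varepsilon_{C_n}^{l_1+\cdots+l_n-k_{C_n}-\delta_{C_n}}+\sum_{1\le j\le n}\prod_{1\le i\le n,i\ne j}\Big(\sum_{h_{A_i}\le l\le k_{A_i}}|a_{A_i,l}|\varepsilon_{C_n}^{l}+G_{A_i}\varepsilon_{C_n}^{k_{A_i}+\delta_{A_i}}\Big)G_{A_j}\varepsilon_{C_n}^{k_{A_j}+\delta_{A_j}-k_{C_n}-\delta_{C_n}}$. (iii) The parameters $\delta_{B_n},G_{B_n},\varepsilon_{B_n}$ and $\delta_{C_n},G_{C_n},\varepsilon_{C_n}$ are invariant under any permutation of the summands, respectively factors.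
   Context: Let $0<\varepsilon_0\le1$. A function $A:(0,\varepsilon_0]\to\mathbb{R}$ is an $(h,k,\delta,G,\varepsilon_A)$-expansion with coefficients $a_h,\dots,a_k$ (integers $h\le k$, reals $a_l$, $\delta\in(0,1]$, $G\in(0,\infty)$, $\varepsilon_A\in(0,\varepsilon_0]$) if the remainder $o_A(\varepsilon):=A(\varepsilon)-\sum_{l=h}^k a_l\varepsilon^l$ satisfies $|o_A(\varepsilon)|\le G\varepsilon^{k+\delta}$ for $0<\varepsilon\le\varepsilon_A$. *)

theory Defs
  imports "HOL-Analysis.Analysis" "HOL-Combinatorics.Permutations"
begin

definition expansion ::
  "real \<Rightarrow> (real \<Rightarrow> real) \<Rightarrow> int \<Rightarrow> int \<Rightarrow> real \<Rightarrow> real \<Rightarrow> real \<Rightarrow> (int \<Rightarrow> real) \<Rightarrow> bool" where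
  "expansion eps0 A h k \<delta> G epsA a \<longleftrightarrow>
     h \<le> k \<and> 0 < \<delta> \<and> \<delta> \<le> 1 \<and> 0 < G \<and> 0 < epsA \<and> epsA \<le> eps0 \<and>
     (\<forall>\<epsilon>. 0 < \<epsilon> \<and> \<epsilon> \<le> epsA \<longrightarrow>
        \<bar>A \<epsilon> - (\<Sum>l=h..k. a l * \<epsilon> powr of_int l)\<bar> \<le> G * \<epsilon> powr (of_int k + \<delta>))"

definition coef_ext :: "int \<Rightarrow> int \<Rightarrow> (int \<Rightarrow> real) \<Rightarrow> int \<Rightarrow> real" where
  "coef_ext h k a l = (if h \<le> l \<and> l \<le> k then a l else 0)"

definition sumB_h :: "nat \<Rightarrow> (nat \<Rightarrow> int) \<Rightarrow> int" where
  "sumB_h n hA = Min (hA ` {1..n})"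

definition sumB_k :: "nat \<Rightarrow> (nat \<Rightarrow> int) \<Rightarrow> int" where
  "sumB_k n kA = Min (kA ` {1..n})"

definition sumB_K :: "nat \<Rightarrow> (nat \<Rightarrow> int) \<Rightarrow> nat set" where
  "sumB_K n kA = {m \<in> {1..n}. kA m = sumB_k n kA}"

definition sumB_delta :: "nat \<Rightarrow> (nat \<Rightarrow> int) \<Rightarrow> (nat \<Rightarrow> real) \<Rightarrow> real" where
  "sumB_delta n kA \<delta>A = Min (\<delta>A ` sumB_K n kA)"

definition sumB_eps :: "nat \<Rightarrow> (nat \<Rightarrow> real) \<Rightarrow> real" where
  "sumB_eps n epsA = Min (epsA ` {1..n})"

definition sumB_coef :: "nat \<Rightarrow> (nat \<Rightarrow> int) \<Rightarrow> (nat \<Rightarrow> int) \<Rightarrow> (nat \<Rightarrow> int \<Rightarrow> real) \<Rightarrow> int \<Rightarrow> real" where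
  "sumB_coef n hA kA a l = (\<Sum>m=1..n. coef_ext (hA m) (kA m) (a m) l)"

definition sumB_G :: "nat \<Rightarrow> (nat \<Rightarrow> int) \<Rightarrow> (nat \<Rightarrow> int) \<Rightarrow> (nat \<Rightarrow> real) \<Rightarrow> (nat \<Rightarrow> real)
    \<Rightarrow> (nat \<Rightarrow> real) \<Rightarrow> (nat \<Rightarrow> int \<Rightarrow> real) \<Rightarrow> real" where
  "sumB_G n hA kA \<delta>A GA epsA a =
     (let kB = sumB_k n kA; \<delta>B = sumB_delta n kA \<delta>A; eB = sumB_eps n epsA in
      (\<Sum>i=1..n. GA i * eB powr (of_int (kA i) + \<delta>A i - of_int kB - \<delta>B)
         + (\<Sum>j\<in>{kB<..kA i}. \<bar>coef_ext (hA i) (kA i) (a i) j\<bar> * eB powr (of_int j - of_int kB - \<delta>B))))"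

definition prodC_h :: "nat \<Rightarrow> (nat \<Rightarrow> int) \<Rightarrow> int" where
  "prodC_h n hA = (\<Sum>m=1..n. hA m)"

definition prodC_k :: "nat \<Rightarrow> (nat \<Rightarrow> int) \<Rightarrow> (nat \<Rightarrow> int) \<Rightarrow> int" where
  "prodC_k n hA kA = Min ((\<lambda>l. kA l + (\<Sum>r\<in>{1..n} - {l}. hA r)) ` {1..n})"

definition prodC_L :: "nat \<Rightarrow> (nat \<Rightarrow> int) \<Rightarrow> (nat \<Rightarrow> int) \<Rightarrow> nat set" where
  "prodC_L n hA kA = {m \<in> {1..n}. kA m + (\<Sum>r\<in>{1..n} - {m}. hA r) = prodC_k n hA kA}"

definition prodC_delta :: "nat \<Rightarrow> (nat \<Rightarrow> int) \<Rightarrow> (nat \<Rightarrow> int) \<Rightarrow> (nat \<Rightarrow> real) \<Rightarrow> real" where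
  "prodC_delta n hA kA \<delta>A = Min (\<delta>A ` prodC_L n hA kA)"

definition prodC_eps :: "nat \<Rightarrow> (nat \<Rightarrow> real) \<Rightarrow> real" where
  "prodC_eps n epsA = Min (epsA ` {1..n})"

definition tuples :: "nat \<Rightarrow> (nat \<Rightarrow> int) \<Rightarrow> (nat \<Rightarrow> int) \<Rightarrow> (nat \<Rightarrow> int) set" where
  "tuples n hA kA = PiE {1..n} (\<lambda>i. {hA i..kA i})"

definition prodC_coef :: "nat \<Rightarrow> (nat \<Rightarrow> int) \<Rightarrow> (nat \<Rightarrow> int) \<Rightarrow> (nat \<Rightarrow> int \<Rightarrow> real) \<Rightarrow> int \<Rightarrow> real" where
  "prodC_coef n hA kA a r =
     (\<Sum>l\<in>{l \<in> tuples n hA kA. (\<Sum>i=1..n. l i) = r}. \<Prod>i=1..n. a i (l i))"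

definition prodC_G :: "nat \<Rightarrow> (nat \<Rightarrow> int) \<Rightarrow> (nat \<Rightarrow> int) \<Rightarrow> (nat \<Rightarrow> real) \<Rightarrow> (nat \<Rightarrow> real)
    \<Rightarrow> (nat \<Rightarrow> real) \<Rightarrow> (nat \<Rightarrow> int \<Rightarrow> real) \<Rightarrow> real" where
  "prodC_G n hA kA \<delta>A GA epsA a =
     (let kC = prodC_k n hA kA; \<delta>C = prodC_delta n hA kA \<delta>A; eC = prodC_eps n epsA in
      (\<Sum>l\<in>{l \<in> tuples n hA kA. kC < (\<Sum>i=1..n. l i)}.
          (\<Prod>i=1..n. \<bar>a i (l i)\<bar>) * eC powr (of_int (\<Sum>i=1..n. l i) - of_int kC - \<delta>C))
      + (\<Sum>j=1..n. (\<Prod>i\<in>{1..n} - {j}.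
             (\<Sum>l=hA i..kA i. \<bar>a i l\<bar> * eC powr of_int l) + GA i * eC powr (of_int (kA i) + \<delta>A i))
           * GA j * eC powr (of_int (kA j) + \<delta>A j - of_int kC - \<delta>C)))"

end

theory Submission
  imports Defs
begin

lemma pw_le: "0 < (\<epsilon>::real) \<Longrightarrow> \<epsilon> \<le> e \<Longrightarrow> x \<le> y \<Longrightarrow> \<epsilon> powr y \<le> \<epsilon> powr x * e powr (y - x)"
proof -
  assume h: "0 < \<epsilon>" "\<epsilon> \<le> e" "x \<le> y"
  have "\<epsilon> powr y = \<epsilon> powr x * \<epsilon> powr (y - x)" by (simp add: powr_add[symmetric])
  also have "\<dots> \<le> \<epsilon> powr x * e powr (y - x)"
    using h by (intro mult_left_mono powr_mono2) auto
  finally show ?thesis .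
qed

lemma pw_le2: "0 < (\<epsilon>::real) \<Longrightarrow> \<epsilon> \<le> e \<Longrightarrow> h \<le> x \<Longrightarrow> \<epsilon> powr x \<le> (\<epsilon>/e) powr h * e powr x"
proof -
  assume hh: "0 < \<epsilon>" "\<epsilon> \<le> e" "h \<le> x"
  have e: "0 < e" using hh by auto
  have "\<epsilon> powr x = (\<epsilon>/e) powr x * e powr x" using e by (simp add: powr_divide)
  also have "\<dots> \<le> (\<epsilon>/e) powr h * e powr x"
    using hh e by (intro mult_right_mono powr_mono') auto
  finally show ?thesis .
qed

lemma sum_part:
  assumes n1: "1 \<le> n" and e0: "0 < eps0"
    and ex: "\<forall>m\<in>{1..n}. expansion eps0 (A m) (hA m) (kA m) (\<delta>A m) (GA m) (epsA m) (a m)"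
  shows "expansion eps0 (\<lambda>\<epsilon>. \<Sum>m=1..n. A m \<epsilon>) (sumB_h n hA) (sumB_k n kA)
       (sumB_delta n kA \<delta>A) (sumB_G n hA kA \<delta>A GA epsA a) (sumB_eps n epsA) (sumB_coef n hA kA a)
     \<and> Min (\<delta>A ` {1..n}) \<le> sumB_delta n kA \<delta>A"
proof -
  define I where "I = {1..n}"
  have fI: "finite I" and neI: "I \<noteq> {}" using n1 by (auto simp: I_def)
  define hB where "hB = sumB_h n hA"
  define kB where "kB = sumB_k n kA"
  define K where "K = sumB_K n kA"
  define \<delta>B where "\<delta>B = sumB_delta n kA \<delta>A"
  define eB where "eB = sumB_eps n epsA"
  define c where "c = (\<lambda>m. coef_ext (hA m) (kA m) (a m))"
  have exm: "\<And>m. m \<in> I \<Longrightarrow> hA m \<le> kA m \<and> 0 < \<delta>A m \<and> \<delta>A m \<le> 1 \<and> 0 < GA m \<and> 0 < epsA m \<and> epsA m \<le> eps0 \<and>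
     (\<forall>\<epsilon>. 0 < \<epsilon> \<and> \<epsilon> \<le> epsA m \<longrightarrow>
        \<bar>A m \<epsilon> - (\<Sum>l=hA m..kA m. a m l * \<epsilon> powr of_int l)\<bar> \<le> GA m * \<epsilon> powr (of_int (kA m) + \<delta>A m))"
    using ex unfolding I_def expansion_def by blast
  have hBle: "\<And>m. m \<in> I \<Longrightarrow> hB \<le> hA m" unfolding hB_def sumB_h_def I_def[symmetric]
    using fI by auto
  have kBle: "\<And>m. m \<in> I \<Longrightarrow> kB \<le> kA m" unfolding kB_def sumB_k_def I_def[symmetric]
    using fI by auto
  have "kB \<in> kA ` I" unfolding kB_def sumB_k_def I_def[symmetric] using fI neI by auto
  then obtain m0 where m0: "m0 \<in> I" "kA m0 = kB" by auto
  have hBkB: "hB \<le> kB" using hBle[OF m0(1)] exm[OF m0(1)] m0 by auto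
  have KI: "K \<subseteq> I" and fK: "finite K" and m0K: "m0 \<in> K"
    using m0 fI unfolding K_def sumB_K_def I_def kB_def by auto
  have dBin: "\<delta>B \<in> \<delta>A ` K" unfolding \<delta>B_def sumB_delta_def K_def[symmetric]
    using fK m0K by (intro Min_in) auto
  have dBle: "\<And>m. m \<in> K \<Longrightarrow> \<delta>B \<le> \<delta>A m" unfolding \<delta>B_def sumB_delta_def K_def[symmetric]
    using fK by auto
  have dB: "0 < \<delta>B" "\<delta>B \<le> 1" using dBin KI exm by auto
  have mindB: "Min (\<delta>A ` {1..n}) \<le> \<delta>B"
    using dBin KI fI by (auto simp: I_def intro: Min_le)
  have eBin: "eB \<in> epsA ` I" unfolding eB_def sumB_eps_def I_def[symmetric] using fI neI by auto
  have eBle: "\<And>m. m \<in> I \<Longrightarrow> eB \<le> epsA m" unfolding eB_def sumB_eps_def I_def[symmetric]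
    using fI by auto
  have eB: "0 < eB" "eB \<le> eps0" using eBin exm by auto
  have key: "\<And>m. m \<in> I \<Longrightarrow> of_int kB + \<delta>B \<le> of_int (kA m) + \<delta>A m"
  proof -
    fix m assume m: "m \<in> I"
    show "of_int kB + \<delta>B \<le> of_int (kA m) + \<delta>A m"
    proof (cases "kA m = kB")
      case True
      then have "m \<in> K" using m unfolding K_def sumB_K_def I_def kB_def by auto
      then show ?thesis using dBle True by auto
    next
      case False
      then have "kB + 1 \<le> kA m" using kBle[OF m] by auto
      then have "real_of_int kB + 1 \<le> of_int (kA m)" by linarith
      then show ?thesis using dB exm[OF m] by auto
    qed
  qed
  define G where "G = sumB_G n hA kA \<delta>A GA epsA a"
  have G_eq: "G = (\<Sum>i\<in>I. GA i * eB powr (of_int (kA i) + \<delta>A i - of_int kB - \<delta>B)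
         + (\<Sum>j\<in>{kB<..kA i}. \<bar>c i j\<bar> * eB powr (of_int j - of_int kB - \<delta>B)))"
    unfolding G_def sumB_G_def Let_def I_def c_def kB_def \<delta>B_def eB_def by simp
  have Gpos: "0 < G" unfolding G_eq
    using fI neI exm eB by (intro sum_pos add_pos_nonneg sum_nonneg mult_pos_pos) auto
  have bound: "\<bar>(\<Sum>m=1..n. A m \<epsilon>) - (\<Sum>l=hB..kB. sumB_coef n hA kA a l * \<epsilon> powr of_int l)\<bar>
      \<le> G * \<epsilon> powr (of_int kB + \<delta>B)" if \<epsilon>: "0 < \<epsilon>" "\<epsilon> \<le> eB" for \<epsilon>
  proof -
    define E where "E = \<epsilon> powr (of_int kB + \<delta>B)"
    have split: "(\<Sum>l=hA m..kA m. a m l * \<epsilon> powr of_int l) =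
        (\<Sum>l=hB..kB. c m l * \<epsilon> powr of_int l) + (\<Sum>l\<in>{kB<..kA m}. c m l * \<epsilon> powr of_int l)"
      if m: "m \<in> I" for m
    proof -
      have "(\<Sum>l=hA m..kA m. a m l * \<epsilon> powr of_int l) = (\<Sum>l=hB..kA m. c m l * \<epsilon> powr of_int l)"
        using hBle[OF m] by (intro sum.mono_neutral_cong_left) (auto simp: c_def coef_ext_def)
      also have "{hB..kA m} = {hB..kB} \<union> {kB<..kA m}" using hBkB kBle[OF m] by auto
      also have "(\<Sum>l\<in>{hB..kB} \<union> {kB<..kA m}. c m l * \<epsilon> powr of_int l) =
         (\<Sum>l=hB..kB. c m l * \<epsilon> powr of_int l) + (\<Sum>l\<in>{kB<..kA m}. c m l * \<epsilon> powr of_int l)"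
        by (intro sum.union_disjoint) auto
      finally show ?thesis .
    qed
    have "(\<Sum>l=hB..kB. sumB_coef n hA kA a l * \<epsilon> powr of_int l) = (\<Sum>m\<in>I. \<Sum>l=hB..kB. c m l * \<epsilon> powr of_int l)"
      unfolding sumB_coef_def I_def[symmetric]
      by (simp add: sum_distrib_right sum.swap[of _ "{hB..kB}"] c_def)
    then have "(\<Sum>m=1..n. A m \<epsilon>) - (\<Sum>l=hB..kB. sumB_coef n hA kA a l * \<epsilon> powr of_int l)
       = (\<Sum>m\<in>I. (A m \<epsilon> - (\<Sum>l=hA m..kA m. a m l * \<epsilon> powr of_int l)) + (\<Sum>l\<in>{kB<..kA m}. c m l * \<epsilon> powr of_int l))"
    proof -
      assume eq: "(\<Sum>l=hB..kB. sumB_coef n hA kA a l * \<epsilon> powr of_int l) = (\<Sum>m\<in>I. \<Sum>l=hB..kB. c m l * \<epsilon> powr of_int l)"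
      have "(\<Sum>m\<in>I. (A m \<epsilon> - (\<Sum>l=hA m..kA m. a m l * \<epsilon> powr of_int l)) + (\<Sum>l\<in>{kB<..kA m}. c m l * \<epsilon> powr of_int l))
        = (\<Sum>m\<in>I. A m \<epsilon> - (\<Sum>l=hB..kB. c m l * \<epsilon> powr of_int l))"
        by (intro sum.cong refl) (simp add: split)
      also have "\<dots> = (\<Sum>m=1..n. A m \<epsilon>) - (\<Sum>l=hB..kB. sumB_coef n hA kA a l * \<epsilon> powr of_int l)"
        by (simp add: sum_subtractf eq I_def)
      finally show ?thesis by simp
    qed
    also have "\<bar>\<dots>\<bar> \<le> (\<Sum>m\<in>I. \<bar>A m \<epsilon> - (\<Sum>l=hA m..kA m. a m l * \<epsilon> powr of_int l)\<bar> + (\<Sum>l\<in>{kB<..kA m}. \<bar>c m l\<bar> * \<epsilon> powr of_int l))"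
      by (rule order_trans[OF sum_abs], intro sum_mono order_trans[OF abs_triangle_ineq] add_mono order_refl
          order_trans[OF sum_abs]) (auto simp: abs_mult)
    also have "\<dots> \<le> (\<Sum>m\<in>I. E * (GA m * eB powr (of_int (kA m) + \<delta>A m - of_int kB - \<delta>B))
         + (\<Sum>l\<in>{kB<..kA m}. E * (\<bar>c m l\<bar> * eB powr (of_int l - of_int kB - \<delta>B))))"
    proof (intro sum_mono add_mono)
      fix m assume m: "m \<in> I"
      have "\<bar>A m \<epsilon> - (\<Sum>l=hA m..kA m. a m l * \<epsilon> powr of_int l)\<bar> \<le> GA m * \<epsilon> powr (of_int (kA m) + \<delta>A m)"
        using exm[OF m] \<epsilon> eBle[OF m] by auto
      also have "\<dots> \<le> GA m * (E * eB powr (of_int (kA m) + \<delta>A m - (of_int kB + \<delta>B)))"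
        unfolding E_def using exm[OF m] \<epsilon> key[OF m] by (intro mult_left_mono pw_le) auto
      finally show "\<bar>A m \<epsilon> - (\<Sum>l=hA m..kA m. a m l * \<epsilon> powr of_int l)\<bar> \<le> E * (GA m * eB powr (of_int (kA m) + \<delta>A m - of_int kB - \<delta>B))"
        by (simp add: algebra_simps)
      fix l assume l: "l \<in> {kB<..kA m}"
      have "real_of_int kB + 1 \<le> of_int l" using l by auto
      then have "\<epsilon> powr of_int l \<le> E * eB powr (of_int l - (of_int kB + \<delta>B))"
        unfolding E_def using \<epsilon> dB by (intro pw_le) auto
      note lk = this
      show "\<bar>c m l\<bar> * \<epsilon> powr of_int l \<le> E * (\<bar>c m l\<bar> * eB powr (of_int l - of_int kB - \<delta>B))"
        using mult_left_mono[OF lk abs_ge_zero[of "c m l"]] by (simp add: algebra_simps)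
    qed
    also have "\<dots> = G * E" unfolding G_eq
      by (simp add: sum_distrib_left sum_distrib_right algebra_simps)
    finally show ?thesis by (simp add: E_def)
  qed
  show ?thesis
    unfolding expansion_def
    using hBkB dB Gpos eB bound mindB
    by (auto simp: hB_def kB_def \<delta>B_def G_def eB_def)
qed


lemma prod_diff_bound:
  fixes x y M :: "'a \<Rightarrow> real"
  assumes "finite S" "\<And>i. i \<in> S \<Longrightarrow> \<bar>x i\<bar> \<le> M i" "\<And>i. i \<in> S \<Longrightarrow> \<bar>y i\<bar> \<le> M i"
  shows "\<bar>prod x S - prod y S\<bar> \<le> (\<Sum>j\<in>S. \<bar>x j - y j\<bar> * prod M (S - {j}))"
  using assms
proof (induction S rule: finite_induct)
  case empty
  then show ?case by simp
next
  case (insert b S)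
  have IH: "\<bar>prod x S - prod y S\<bar> \<le> (\<Sum>j\<in>S. \<bar>x j - y j\<bar> * prod M (S - {j}))"
    using insert by auto
  have Mb: "\<bar>x b\<bar> \<le> M b" "\<bar>y b\<bar> \<le> M b" using insert by auto
  have pxS: "\<bar>prod x S\<bar> \<le> prod M S"
    unfolding abs_prod using insert by (intro prod_mono) auto
  have "prod x (insert b S) - prod y (insert b S) = (x b - y b) * prod x S + y b * (prod x S - prod y S)"
    using insert by (simp add: algebra_simps)
  also have "\<bar>\<dots>\<bar> \<le> \<bar>x b - y b\<bar> * prod M S + M b * (\<Sum>j\<in>S. \<bar>x j - y j\<bar> * prod M (S - {j}))"
    by (rule order_trans[OF abs_triangle_ineq]) (auto simp: abs_mult intro!: add_mono mult_mono pxS IH Mb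
       intro: order_trans[OF abs_ge_zero Mb(1)])
  also have "\<dots> = (\<Sum>j\<in>insert b S. \<bar>x j - y j\<bar> * prod M (insert b S - {j}))"
  proof -
    have "M b * (\<Sum>j\<in>S. \<bar>x j - y j\<bar> * prod M (S - {j})) = (\<Sum>j\<in>S. \<bar>x j - y j\<bar> * prod M (insert b S - {j}))"
      unfolding sum_distrib_left
    proof (intro sum.cong refl)
      fix j assume j: "j \<in> S"
      have "insert b S - {j} = insert b (S - {j})" using j insert by auto
      then show "M b * (\<bar>x j - y j\<bar> * prod M (S - {j})) = \<bar>x j - y j\<bar> * prod M (insert b S - {j})"
        using insert by simp
    qed
    moreover have "insert b S - {b} = S" using insert by auto
    ultimately show ?thesis using insert by simp
  qed
  finally show ?case .
qed


lemma pw_le3: "0 < (\<epsilon>::real) \<Longrightarrow> \<epsilon> \<le> e \<Longrightarrow> Y \<le> s + x \<Longrightarrow>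
   \<epsilon> powr x * (\<epsilon>/e) powr s \<le> \<epsilon> powr Y * e powr (x - Y)"
proof -
  assume h: "0 < \<epsilon>" "\<epsilon> \<le> e" "Y \<le> s + x"
  have e: "0 < e" using h by auto
  have "\<epsilon> powr x * (\<epsilon>/e) powr s = (\<epsilon>/e) powr (s + x) * e powr x"
    using e h by (simp add: powr_divide powr_add divide_simps)
  also have "\<dots> \<le> (\<epsilon>/e) powr Y * e powr x"
    using h e by (intro mult_right_mono powr_mono') auto
  also have "\<dots> = \<epsilon> powr Y * e powr (x - Y)"
    using e h by (simp add: powr_divide powr_diff)
  finally show ?thesis .
qed

lemma prod_part:
  assumes n1: "1 \<le> n" and e0: "0 < eps0"
    and ex: "\<forall>m\<in>{1..n}. expansion eps0 (A m) (hA m) (kA m) (\<delta>A m) (GA m) (epsA m) (a m)"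
  shows "expansion eps0 (\<lambda>\<epsilon>. \<Prod>m=1..n. A m \<epsilon>) (prodC_h n hA) (prodC_k n hA kA)
       (prodC_delta n hA kA \<delta>A) (prodC_G n hA kA \<delta>A GA epsA a) (prodC_eps n epsA) (prodC_coef n hA kA a)
     \<and> Min (\<delta>A ` {1..n}) \<le> prodC_delta n hA kA \<delta>A"
proof -
  define I where "I = {1..n}"
  have fI: "finite I" and neI: "I \<noteq> {}" using n1 by (auto simp: I_def)
  define hC where "hC = prodC_h n hA"
  define kC where "kC = prodC_k n hA kA"
  define L where "L = prodC_L n hA kA"
  define \<delta>C where "\<delta>C = prodC_delta n hA kA \<delta>A"
  define eC where "eC = prodC_eps n epsA"
  define T where "T = tuples n hA kA"
  define S where "S = (\<lambda>j. \<Sum>r\<in>I - {j}. hA r)"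
  have exm: "\<And>m. m \<in> I \<Longrightarrow> hA m \<le> kA m \<and> 0 < \<delta>A m \<and> \<delta>A m \<le> 1 \<and> 0 < GA m \<and> 0 < epsA m \<and> epsA m \<le> eps0 \<and>
     (\<forall>\<epsilon>. 0 < \<epsilon> \<and> \<epsilon> \<le> epsA m \<longrightarrow>
        \<bar>A m \<epsilon> - (\<Sum>l=hA m..kA m. a m l * \<epsilon> powr of_int l)\<bar> \<le> GA m * \<epsilon> powr (of_int (kA m) + \<delta>A m))"
    using ex unfolding I_def expansion_def by blast
  have hCeq: "hC = hA j + S j" if "j \<in> I" for j
    unfolding hC_def prodC_h_def I_def[symmetric] S_def using that fI by (simp add: sum.remove)
  have kC_eq: "kC = Min ((\<lambda>l. kA l + S l) ` I)" unfolding kC_def prodC_k_def S_def I_def by simp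
  have kCle: "kC \<le> kA j + S j" if "j \<in> I" for j unfolding kC_eq using that fI by auto
  have "kC \<in> (\<lambda>l. kA l + S l) ` I" unfolding kC_eq using fI neI by (intro Min_in) auto
  then obtain j0 where j0: "j0 \<in> I" "kC = kA j0 + S j0" by auto
  have hCkC: "hC \<le> kC" using j0 hCeq[OF j0(1)] exm[OF j0(1)] by auto
  have L_eq: "L = {m \<in> I. kA m + S m = kC}" unfolding L_def prodC_L_def S_def I_def kC_def by simp
  have LI: "L \<subseteq> I" and fL: "finite L" and j0L: "j0 \<in> L"
    using j0 fI unfolding L_eq by auto
  have dCin: "\<delta>C \<in> \<delta>A ` L" unfolding \<delta>C_def prodC_delta_def L_def[symmetric]
    using fL j0L by (intro Min_in) auto
  have dCle: "\<And>m. m \<in> L \<Longrightarrow> \<delta>C \<le> \<delta>A m" unfolding \<delta>C_def prodC_delta_def L_def[symmetric]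
    using fL by auto
  have dC: "0 < \<delta>C" "\<delta>C \<le> 1" using dCin LI exm by auto
  have mindC: "Min (\<delta>A ` {1..n}) \<le> \<delta>C"
    using dCin LI fI by (auto simp: I_def intro: Min_le)
  have eCin: "eC \<in> epsA ` I" unfolding eC_def prodC_eps_def I_def[symmetric] using fI neI by auto
  have eCle: "\<And>m. m \<in> I \<Longrightarrow> eC \<le> epsA m" unfolding eC_def prodC_eps_def I_def[symmetric]
    using fI by auto
  have eC: "0 < eC" "eC \<le> eps0" using eCin exm by auto
  have key: "of_int kC + \<delta>C \<le> of_int (S j) + (of_int (kA j) + \<delta>A j)" if m: "j \<in> I" for j
  proof (cases "kA j + S j = kC")
    case True
    then have "j \<in> L" using m unfolding L_eq by auto
    then show ?thesis using dCle True by force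
  next
    case False
    then have "kC + 1 \<le> kA j + S j" using kCle[OF m] by auto
    then have "real_of_int kC + 1 \<le> of_int (kA j) + of_int (S j)" by linarith
    then show ?thesis using dC exm[OF m] by auto
  qed
  have fT: "finite T" unfolding T_def tuples_def by (intro finite_PiE) auto
  have Trange: "\<And>g i. g \<in> T \<Longrightarrow> i \<in> I \<Longrightarrow> hA i \<le> g i \<and> g i \<le> kA i"
    unfolding T_def tuples_def I_def by (auto simp: PiE_iff)
  have Tsum: "hC \<le> (\<Sum>i\<in>I. g i)" if "g \<in> T" for g
    unfolding hC_def prodC_h_def I_def[symmetric] using Trange[OF that] by (intro sum_mono) auto
  define F where "F = (\<lambda>i. (\<Sum>l=hA i..kA i. \<bar>a i l\<bar> * eC powr of_int l) + GA i * eC powr (of_int (kA i) + \<delta>A i))"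
  define G1 where "G1 = (\<Sum>l\<in>{l \<in> T. kC < (\<Sum>i\<in>I. l i)}.
          (\<Prod>i\<in>I. \<bar>a i (l i)\<bar>) * eC powr (of_int (\<Sum>i\<in>I. l i) - of_int kC - \<delta>C))"
  define G2 where "G2 = (\<Sum>j\<in>I. prod F (I - {j}) * GA j * eC powr (of_int (kA j) + \<delta>A j - of_int kC - \<delta>C))"
  define G where "G = prodC_G n hA kA \<delta>A GA epsA a"
  have G_eq: "G = G1 + G2"
    unfolding G_def prodC_G_def Let_def G1_def G2_def F_def I_def T_def kC_def \<delta>C_def eC_def by simp
  have Fpos: "0 < F i" if "i \<in> I" for i
    unfolding F_def using exm[OF that] eC by (intro add_nonneg_pos sum_nonneg mult_pos_pos) auto
  have G1nn: "0 \<le> G1" unfolding G1_def by (intro sum_nonneg mult_nonneg_nonneg prod_nonneg) auto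
  have G2pos: "0 < G2" unfolding G2_def using fI neI exm eC Fpos
    by (intro sum_pos mult_pos_pos prod_pos) auto
  have Gpos: "0 < G" using G_eq G1nn G2pos by simp
  have bound: "\<bar>(\<Prod>m=1..n. A m \<epsilon>) - (\<Sum>r=hC..kC. prodC_coef n hA kA a r * \<epsilon> powr of_int r)\<bar>
      \<le> G * \<epsilon> powr (of_int kC + \<delta>C)" if \<epsilon>: "0 < \<epsilon>" "\<epsilon> \<le> eC" for \<epsilon>
  proof -
    define E where "E = \<epsilon> powr (of_int kC + \<delta>C)"
    define P where "P = (\<lambda>i. \<Sum>l=hA i..kA i. a i l * \<epsilon> powr of_int l)"
    define X where "X = (\<lambda>g. (\<Prod>i\<in>I. a i (g i)) * \<epsilon> powr of_int (\<Sum>i\<in>I. g i))"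
    have PX: "prod P I = (\<Sum>g\<in>T. X g)"
    proof -
      have "prod P I = (\<Sum>g\<in>T. \<Prod>i\<in>I. a i (g i) * \<epsilon> powr of_int (g i))"
        unfolding P_def T_def tuples_def I_def by (intro prod_sum_PiE) auto
      also have "\<dots> = (\<Sum>g\<in>T. X g)"
        unfolding X_def using \<epsilon> by (simp add: prod.distrib powr_sum)
      finally show ?thesis .
    qed
    have low: "(\<Sum>r=hC..kC. prodC_coef n hA kA a r * \<epsilon> powr of_int r) = (\<Sum>g\<in>{g\<in>T. (\<Sum>i\<in>I. g i) \<le> kC}. X g)"
    proof -
      have "(\<Sum>r=hC..kC. prodC_coef n hA kA a r * \<epsilon> powr of_int r)
          = (\<Sum>r=hC..kC. \<Sum>g\<in>{g\<in>{g\<in>T. (\<Sum>i\<in>I. g i) \<le> kC}. (\<Sum>i\<in>I. g i) = r}. X g)"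
        unfolding prodC_coef_def I_def[symmetric] T_def[symmetric] sum_distrib_right X_def
        by (intro sum.cong refl) (auto intro!: sum.cong)
      also have "\<dots> = (\<Sum>g\<in>{g\<in>T. (\<Sum>i\<in>I. g i) \<le> kC}. X g)"
        using fT Tsum by (intro sum.group) auto
      finally show ?thesis .
    qed
    have split: "(\<Sum>g\<in>T. X g) = (\<Sum>g\<in>{g\<in>T. (\<Sum>i\<in>I. g i) \<le> kC}. X g) + (\<Sum>g\<in>{g\<in>T. kC < (\<Sum>i\<in>I. g i)}. X g)"
    proof -
      have Tu: "T = {g\<in>T. (\<Sum>i\<in>I. g i) \<le> kC} \<union> {g\<in>T. kC < (\<Sum>i\<in>I. g i)}" by auto
      show ?thesis using fT by (subst (1) Tu, intro sum.union_disjoint) auto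
    qed
    have high: "\<bar>\<Sum>g\<in>{g\<in>T. kC < (\<Sum>i\<in>I. g i)}. X g\<bar> \<le> E * G1"
    proof -
      have "\<bar>\<Sum>g\<in>{g\<in>T. kC < (\<Sum>i\<in>I. g i)}. X g\<bar> \<le> (\<Sum>g\<in>{g\<in>T. kC < (\<Sum>i\<in>I. g i)}. \<bar>X g\<bar>)"
        by (rule sum_abs)
      also have "\<dots> \<le> (\<Sum>g\<in>{g\<in>T. kC < (\<Sum>i\<in>I. g i)}. E * ((\<Prod>i\<in>I. \<bar>a i (g i)\<bar>) * eC powr (of_int (\<Sum>i\<in>I. g i) - of_int kC - \<delta>C)))"
      proof (intro sum_mono)
        fix g assume g: "g \<in> {g\<in>T. kC < (\<Sum>i\<in>I. g i)}"
        have "kC + 1 \<le> (\<Sum>i\<in>I. g i)" using g by simp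
        then have "real_of_int kC + 1 \<le> of_int (\<Sum>i\<in>I. g i)"
          by (metis of_int_1 of_int_add of_int_le_iff)
        then have "\<epsilon> powr of_int (\<Sum>i\<in>I. g i) \<le> E * eC powr (of_int (\<Sum>i\<in>I. g i) - (of_int kC + \<delta>C))"
          unfolding E_def using \<epsilon> dC by (intro pw_le) auto
        note lk = this
        show "\<bar>X g\<bar> \<le> E * ((\<Prod>i\<in>I. \<bar>a i (g i)\<bar>) * eC powr (of_int (\<Sum>i\<in>I. g i) - of_int kC - \<delta>C))"
          unfolding X_def using mult_left_mono[OF lk prod_nonneg[of I "\<lambda>i. \<bar>a i (g i)\<bar>"]]
          by (simp add: abs_mult abs_prod algebra_simps)
      qed
      also have "\<dots> = E * G1" unfolding G1_def by (simp add: sum_distrib_left)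
      finally show ?thesis .
    qed
    define f where "f = (\<lambda>i. (\<Sum>l=hA i..kA i. \<bar>a i l\<bar> * \<epsilon> powr of_int l) + GA i * \<epsilon> powr (of_int (kA i) + \<delta>A i))"
    define t where "t = \<epsilon> / eC"
    have Pf: "\<bar>P i\<bar> \<le> f i" if "i \<in> I" for i
    proof -
      have "\<bar>P i\<bar> \<le> (\<Sum>l=hA i..kA i. \<bar>a i l\<bar> * \<epsilon> powr of_int l)"
        unfolding P_def by (rule order_trans[OF sum_abs]) (simp add: abs_mult)
      then show ?thesis unfolding f_def using exm[OF that] by (smt (verit) mult_pos_pos powr_gt_zero \<epsilon>(1))
    qed
    have Af: "\<bar>A i \<epsilon>\<bar> \<le> f i" if "i \<in> I" for i
    proof -
      have "\<bar>A i \<epsilon> - P i\<bar> \<le> GA i * \<epsilon> powr (of_int (kA i) + \<delta>A i)"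
        using exm[OF that] \<epsilon> eCle[OF that] unfolding P_def by auto
      moreover have "\<bar>P i\<bar> \<le> (\<Sum>l=hA i..kA i. \<bar>a i l\<bar> * \<epsilon> powr of_int l)"
        unfolding P_def by (rule order_trans[OF sum_abs]) (simp add: abs_mult)
      ultimately show ?thesis unfolding f_def by linarith
    qed
    have fF: "f i \<le> t powr of_int (hA i) * F i" if "i \<in> I" for i
    proof -
      have "f i \<le> (\<Sum>l=hA i..kA i. \<bar>a i l\<bar> * (t powr of_int (hA i) * eC powr of_int l))
           + GA i * (t powr of_int (hA i) * eC powr (of_int (kA i) + \<delta>A i))"
        unfolding f_def t_def using exm[OF that] \<epsilon>
        by (intro add_mono sum_mono mult_left_mono pw_le2) auto
      also have "\<dots> = t powr of_int (hA i) * F i" unfolding F_def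
        by (simp add: sum_distrib_left algebra_simps)
      finally show ?thesis .
    qed
    have rem: "\<bar>prod (\<lambda>i. A i \<epsilon>) I - prod P I\<bar> \<le> E * G2"
    proof -
      have "\<bar>prod (\<lambda>i. A i \<epsilon>) I - prod P I\<bar> \<le> (\<Sum>j\<in>I. \<bar>A j \<epsilon> - P j\<bar> * prod f (I - {j}))"
        using fI Af Pf by (intro prod_diff_bound) auto
      also have "\<dots> \<le> (\<Sum>j\<in>I. E * (prod F (I - {j}) * GA j * eC powr (of_int (kA j) + \<delta>A j - of_int kC - \<delta>C)))"
      proof (intro sum_mono)
        fix j assume j: "j \<in> I"
        have fnn: "\<And>i. i \<in> I \<Longrightarrow> 0 \<le> f i" using Pf by (meson abs_ge_zero order_trans)
        have "prod f (I - {j}) \<le> (\<Prod>i\<in>I-{j}. t powr of_int (hA i) * F i)"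
          using fnn fF by (intro prod_mono) auto
        also have "\<dots> = t powr of_int (S j) * prod F (I - {j})"
          unfolding S_def prod.distrib using \<epsilon> eC by (simp add: t_def powr_sum)
        finally have p1: "prod f (I - {j}) \<le> t powr of_int (S j) * prod F (I - {j})" .
        have o1: "\<bar>A j \<epsilon> - P j\<bar> \<le> GA j * \<epsilon> powr (of_int (kA j) + \<delta>A j)"
          using exm[OF j] \<epsilon> eCle[OF j] unfolding P_def by auto
        have "\<bar>A j \<epsilon> - P j\<bar> * prod f (I - {j}) \<le> GA j * \<epsilon> powr (of_int (kA j) + \<delta>A j) * (t powr of_int (S j) * prod F (I - {j}))"
          using o1 p1 fnn exm[OF j] by (intro mult_mono) (auto intro: prod_nonneg)
        also have "\<dots> = GA j * prod F (I - {j}) * (\<epsilon> powr (of_int (kA j) + \<delta>A j) * t powr of_int (S j))"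
          by (simp add: algebra_simps)
        also have "\<dots> \<le> GA j * prod F (I - {j}) * (E * eC powr (of_int (kA j) + \<delta>A j - (of_int kC + \<delta>C)))"
          unfolding E_def t_def using exm[OF j] Fpos \<epsilon> key[OF j]
          by (intro mult_left_mono pw_le3 mult_nonneg_nonneg prod_nonneg) (auto intro: less_imp_le)
        finally show "\<bar>A j \<epsilon> - P j\<bar> * prod f (I - {j}) \<le> E * (prod F (I - {j}) * GA j * eC powr (of_int (kA j) + \<delta>A j - of_int kC - \<delta>C))"
          by (simp add: algebra_simps)
      qed
      also have "\<dots> = E * G2" unfolding G2_def by (simp add: sum_distrib_left)
      finally show ?thesis .
    qed
    have "(\<Prod>m=1..n. A m \<epsilon>) - (\<Sum>r=hC..kC. prodC_coef n hA kA a r * \<epsilon> powr of_int r)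
       = (prod (\<lambda>i. A i \<epsilon>) I - prod P I) + (\<Sum>g\<in>{g\<in>T. kC < (\<Sum>i\<in>I. g i)}. X g)"
      using PX low split by (simp add: I_def)
    also have "\<bar>\<dots>\<bar> \<le> E * G2 + E * G1" using rem high by linarith
    also have "\<dots> = G * E" using G_eq by (simp add: algebra_simps)
    finally show ?thesis by (simp add: E_def)
  qed
  show ?thesis
    unfolding expansion_def
    using hCkC dC Gpos eC bound mindC
    by (auto simp: hC_def kC_def \<delta>C_def G_def eC_def)
qed


lemma perm_Collect: assumes \<sigma>: "\<sigma> permutes I"
  shows "\<sigma> ` {m\<in>I. P (\<sigma> m)} = {m\<in>I. P m}"
proof
  show "\<sigma> ` {m\<in>I. P (\<sigma> m)} \<subseteq> {m\<in>I. P m}" using permutes_in_image[OF \<sigma>] by auto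
next
  show "{m\<in>I. P m} \<subseteq> \<sigma> ` {m\<in>I. P (\<sigma> m)}"
  proof
    fix x assume x: "x \<in> {m\<in>I. P m}"
    have "inv \<sigma> x \<in> I" using x permutes_in_image[OF \<sigma>, of "inv \<sigma> x"] permutes_inverses(1)[OF \<sigma>] by auto
    then show "x \<in> \<sigma> ` {m\<in>I. P (\<sigma> m)}" using x permutes_inverses(1)[OF \<sigma>]
      by (intro image_eqI[of _ _ "inv \<sigma> x"]) auto
  qed
qed

lemma perm_remove: assumes \<sigma>: "\<sigma> permutes I" and l: "l \<in> I"
  shows "\<sigma> ` (I - {l}) = I - {\<sigma> l}"
  by (simp add: image_set_diff[OF permutes_inj[OF \<sigma>]] permutes_image[OF \<sigma>])

lemma perm_sum_remove: assumes \<sigma>: "\<sigma> permutes I" and l: "l \<in> I"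
  shows "(\<Sum>r\<in>I - {l}. f (\<sigma> r)) = (\<Sum>r\<in>I - {\<sigma> l}. f r)"
proof -
  have "(\<Sum>r\<in>I - {\<sigma> l}. f r) = (\<Sum>r\<in>\<sigma> ` (I - {l}). f r)" using perm_remove[OF \<sigma> l] by simp
  also have "\<dots> = (\<Sum>r\<in>I - {l}. f (\<sigma> r))"
    by (rule sum.reindex[OF inj_on_subset[OF permutes_inj_on[OF \<sigma>]], simplified]) auto
  finally show ?thesis by simp
qed

lemma perm_prod_remove: assumes \<sigma>: "\<sigma> permutes I" and l: "l \<in> I"
  shows "(\<Prod>r\<in>I - {l}. f (\<sigma> r)) = (\<Prod>r\<in>I - {\<sigma> l}. f r)"
proof -
  have "(\<Prod>r\<in>I - {\<sigma> l}. f r) = (\<Prod>r\<in>\<sigma> ` (I - {l}). f r)" using perm_remove[OF \<sigma> l] by simp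
  also have "\<dots> = (\<Prod>r\<in>I - {l}. f (\<sigma> r))"
    by (rule prod.reindex[OF inj_on_subset[OF permutes_inj_on[OF \<sigma>]], simplified]) auto
  finally show ?thesis by simp
qed

lemma perm_part:
  assumes \<sigma>: "\<sigma> permutes {1..n}"
  shows "sumB_delta n (kA \<circ> \<sigma>) (\<delta>A \<circ> \<sigma>) = sumB_delta n kA \<delta>A
       \<and> sumB_G n (hA \<circ> \<sigma>) (kA \<circ> \<sigma>) (\<delta>A \<circ> \<sigma>) (GA \<circ> \<sigma>) (epsA \<circ> \<sigma>) (a \<circ> \<sigma>)
           = sumB_G n hA kA \<delta>A GA epsA a
       \<and> sumB_eps n (epsA \<circ> \<sigma>) = sumB_eps n epsA
       \<and> prodC_delta n (hA \<circ> \<sigma>) (kA \<circ> \<sigma>) (\<delta>A \<circ> \<sigma>) = prodC_delta n hA kA \<delta>A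
       \<and> prodC_G n (hA \<circ> \<sigma>) (kA \<circ> \<sigma>) (\<delta>A \<circ> \<sigma>) (GA \<circ> \<sigma>) (epsA \<circ> \<sigma>) (a \<circ> \<sigma>)
           = prodC_G n hA kA \<delta>A GA epsA a
       \<and> prodC_eps n (epsA \<circ> \<sigma>) = prodC_eps n epsA"
proof -
  define I where "I = {1..n}"
  have \<sigma>I: "\<sigma> permutes I" using \<sigma> by (simp add: I_def)
  have img: "\<And>f. (f \<circ> \<sigma>) ` I = f ` I" unfolding image_comp[symmetric] permutes_image[OF \<sigma>I] ..
  have kB: "sumB_k n (kA \<circ> \<sigma>) = sumB_k n kA" unfolding sumB_k_def I_def[symmetric] img ..
  have K: "\<sigma> ` sumB_K n (kA \<circ> \<sigma>) = sumB_K n kA"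
    unfolding sumB_K_def kB I_def[symmetric] using perm_Collect[OF \<sigma>I, of "\<lambda>m. kA m = sumB_k n kA"] by simp
  have dB: "sumB_delta n (kA \<circ> \<sigma>) (\<delta>A \<circ> \<sigma>) = sumB_delta n kA \<delta>A"
    unfolding sumB_delta_def image_comp[symmetric] K ..
  have eB: "sumB_eps n (epsA \<circ> \<sigma>) = sumB_eps n epsA" unfolding sumB_eps_def I_def[symmetric] img ..
  have GB: "sumB_G n (hA \<circ> \<sigma>) (kA \<circ> \<sigma>) (\<delta>A \<circ> \<sigma>) (GA \<circ> \<sigma>) (epsA \<circ> \<sigma>) (a \<circ> \<sigma>) = sumB_G n hA kA \<delta>A GA epsA a"
    unfolding sumB_G_def Let_def kB dB eB I_def[symmetric]
    by (subst (2) sum.permute[OF \<sigma>I]) (simp add: o_def)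
  have eC: "prodC_eps n (epsA \<circ> \<sigma>) = prodC_eps n epsA" unfolding prodC_eps_def I_def[symmetric] img ..
  define g where "g = (\<lambda>l. kA l + (\<Sum>r\<in>I - {l}. hA r))"
  have gs: "(\<lambda>l. (kA \<circ> \<sigma>) l + (\<Sum>r\<in>I - {l}. (hA \<circ> \<sigma>) r)) ` I = g ` I"
  proof -
    have "(\<lambda>l. (kA \<circ> \<sigma>) l + (\<Sum>r\<in>I - {l}. (hA \<circ> \<sigma>) r)) ` I = (g \<circ> \<sigma>) ` I"
      unfolding g_def using perm_sum_remove[OF \<sigma>I, of _ hA] by (intro image_cong refl) simp
    then show ?thesis using img by simp
  qed
  have kC: "prodC_k n (hA \<circ> \<sigma>) (kA \<circ> \<sigma>) = prodC_k n hA kA"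
    unfolding prodC_k_def I_def[symmetric] gs g_def ..
  have L: "\<sigma> ` prodC_L n (hA \<circ> \<sigma>) (kA \<circ> \<sigma>) = prodC_L n hA kA"
  proof -
    have "prodC_L n (hA \<circ> \<sigma>) (kA \<circ> \<sigma>) = {m\<in>I. g (\<sigma> m) = prodC_k n hA kA}"
      unfolding prodC_L_def kC I_def[symmetric] g_def using perm_sum_remove[OF \<sigma>I, of _ hA]
      by auto
    moreover have "prodC_L n hA kA = {m\<in>I. g m = prodC_k n hA kA}"
      by (simp add: prodC_L_def I_def g_def)
    ultimately show ?thesis using perm_Collect[OF \<sigma>I, of "\<lambda>m. g m = prodC_k n hA kA"] by (simp only:)
  qed
  have dC: "prodC_delta n (hA \<circ> \<sigma>) (kA \<circ> \<sigma>) (\<delta>A \<circ> \<sigma>) = prodC_delta n hA kA \<delta>A"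
    unfolding prodC_delta_def image_comp[symmetric] L ..
  define T where "T = tuples n hA kA"
  define T' where "T' = tuples n (hA \<circ> \<sigma>) (kA \<circ> \<sigma>)"
  have bij: "bij_betw (\<lambda>l. l \<circ> \<sigma>) T T'"
  proof (rule bij_betw_byWitness[where f' = "\<lambda>l. l \<circ> inv \<sigma>"])
    show "\<forall>l\<in>T. l \<circ> \<sigma> \<circ> inv \<sigma> = l" by (simp add: o_assoc[symmetric] permutes_inv_o[OF \<sigma>I])
    show "\<forall>l\<in>T'. l \<circ> inv \<sigma> \<circ> \<sigma> = l" by (simp add: o_assoc[symmetric] permutes_inv_o[OF \<sigma>I])
    show "(\<lambda>l. l \<circ> \<sigma>) ` T \<subseteq> T'"
    proof
      fix x assume "x \<in> (\<lambda>l. l \<circ> \<sigma>) ` T"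
      then obtain l where l: "l \<in> T" and x: "x = l \<circ> \<sigma>" by blast
      have l1: "\<And>i. i \<in> I \<Longrightarrow> l i \<in> {hA i..kA i}" and l2: "\<And>i. i \<notin> I \<Longrightarrow> l i = undefined"
        using l unfolding T_def tuples_def I_def[symmetric] by (auto simp: PiE_iff extensional_def)
      have "\<And>i. i \<in> I \<Longrightarrow> x i \<in> {(hA \<circ> \<sigma>) i..(kA \<circ> \<sigma>) i}"
        unfolding x o_def by (rule l1) (simp add: permutes_in_image[OF \<sigma>I])
      moreover have "\<And>i. i \<notin> I \<Longrightarrow> x i = undefined"
        unfolding x o_def using l2 permutes_not_in[OF \<sigma>I] by simp
      ultimately show "x \<in> T'" unfolding T'_def tuples_def I_def[symmetric]
        by (simp add: PiE_iff extensional_def del: atLeastAtMost_iff)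
    qed
    show "(\<lambda>l. l \<circ> inv \<sigma>) ` T' \<subseteq> T"
    proof
      fix x assume "x \<in> (\<lambda>l. l \<circ> inv \<sigma>) ` T'"
      then obtain l where l: "l \<in> T'" and x: "x = l \<circ> inv \<sigma>" by blast
      have l1: "\<And>i. i \<in> I \<Longrightarrow> l i \<in> {hA (\<sigma> i)..kA (\<sigma> i)}" and l2: "\<And>i. i \<notin> I \<Longrightarrow> l i = undefined"
        using l unfolding T'_def tuples_def I_def[symmetric] by (auto simp: PiE_iff extensional_def)
      have "x i \<in> {hA i..kA i}" if i: "i \<in> I" for i
      proof -
        have "inv \<sigma> i \<in> I" using i permutes_in_image[OF permutes_inv[OF \<sigma>I]] by simp
        from l1[OF this] show ?thesis unfolding x o_def permutes_inverses(1)[OF \<sigma>I] .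
      qed
      moreover have "\<And>i. i \<notin> I \<Longrightarrow> x i = undefined"
        unfolding x o_def using l2 permutes_not_in[OF permutes_inv[OF \<sigma>I]] by simp
      ultimately show "x \<in> T" unfolding T_def tuples_def I_def[symmetric]
        by (simp add: PiE_iff extensional_def del: atLeastAtMost_iff)
    qed
  qed
  have sl: "(\<Sum>i\<in>I. (l \<circ> \<sigma>) i) = (\<Sum>i\<in>I. l i)" for l :: "nat \<Rightarrow> int"
    using sum.permute[OF \<sigma>I, of l] by simp
  have pl: "(\<Prod>i\<in>I. \<bar>(a \<circ> \<sigma>) i ((l \<circ> \<sigma>) i)\<bar>) = (\<Prod>i\<in>I. \<bar>a i (l i)\<bar>)" for l :: "nat \<Rightarrow> int"
    using prod.permute[OF \<sigma>I, of "\<lambda>i. \<bar>a i (l i)\<bar>"] by (simp add: o_def)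
  have GC: "prodC_G n (hA \<circ> \<sigma>) (kA \<circ> \<sigma>) (\<delta>A \<circ> \<sigma>) (GA \<circ> \<sigma>) (epsA \<circ> \<sigma>) (a \<circ> \<sigma>) = prodC_G n hA kA \<delta>A GA epsA a"
  proof -
    define F where "F = (\<lambda>i. (\<Sum>l=hA i..kA i. \<bar>a i l\<bar> * prodC_eps n epsA powr of_int l) + GA i * prodC_eps n epsA powr (of_int (kA i) + \<delta>A i))"
    define K where "K = prodC_k n hA kA"
    define D where "D = prodC_delta n hA kA \<delta>A"
    define e where "e = prodC_eps n epsA"
    have s1: "(\<Sum>l\<in>{l\<in>T'. K < (\<Sum>i\<in>I. l i)}. (\<Prod>i\<in>I. \<bar>(a \<circ> \<sigma>) i (l i)\<bar>) * e powr (of_int (\<Sum>i\<in>I. l i) - of_int K - D))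
      = (\<Sum>l\<in>{l\<in>T. K < (\<Sum>i\<in>I. l i)}. (\<Prod>i\<in>I. \<bar>a i (l i)\<bar>) * e powr (of_int (\<Sum>i\<in>I. l i) - of_int K - D))"
    proof -
      have fT: "finite T" "finite T'" unfolding T_def T'_def tuples_def by (auto intro!: finite_PiE)
      show ?thesis
        unfolding sum.inter_filter[OF fT(1)] sum.inter_filter[OF fT(2)]
        by (subst sum.reindex_bij_betw[OF bij, symmetric]) (simp only: sl pl)
    qed
    have s2: "(\<Sum>j\<in>I. (\<Prod>i\<in>I - {j}. F (\<sigma> i)) * GA (\<sigma> j) * e powr (of_int (kA (\<sigma> j)) + \<delta>A (\<sigma> j) - of_int K - D))
       = (\<Sum>j\<in>I. (\<Prod>i\<in>I - {j}. F i) * GA j * e powr (of_int (kA j) + \<delta>A j - of_int K - D))"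
    proof -
      have "(\<Sum>j\<in>I. (\<Prod>i\<in>I - {j}. F (\<sigma> i)) * GA (\<sigma> j) * e powr (of_int (kA (\<sigma> j)) + \<delta>A (\<sigma> j) - of_int K - D))
         = (\<Sum>j\<in>I. (\<lambda>j. (\<Prod>i\<in>I - {j}. F i) * GA j * e powr (of_int (kA j) + \<delta>A j - of_int K - D)) (\<sigma> j))"
        using perm_prod_remove[OF \<sigma>I, of _ F] by (intro sum.cong refl) simp
      also have "\<dots> = (\<Sum>j\<in>I. (\<Prod>i\<in>I - {j}. F i) * GA j * e powr (of_int (kA j) + \<delta>A j - of_int K - D))"
        using sum.permute[OF \<sigma>I, of "\<lambda>j. (\<Prod>i\<in>I - {j}. F i) * GA j * e powr (of_int (kA j) + \<delta>A j - of_int K - D)"]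
        by (simp add: o_def)
      finally show ?thesis .
    qed
    show ?thesis
      unfolding prodC_G_def Let_def kC dC eC I_def[symmetric] T_def[symmetric] T'_def[symmetric]
        K_def[symmetric] D_def[symmetric] e_def[symmetric]
      using s1 s2 by (simp add: F_def e_def)
  qed
  show ?thesis by (intro conjI dB GB eB dC GC eC)
qed


theorem lemma3:
  fixes eps0 :: real and N :: nat and A :: "nat \<Rightarrow> real \<Rightarrow> real"
    and hA kA :: "nat \<Rightarrow> int" and \<delta>A GA epsA :: "nat \<Rightarrow> real"
    and a :: "nat \<Rightarrow> int \<Rightarrow> real"
  assumes "0 < eps0" and "eps0 \<le> 1" and "1 \<le> N"
    and "\<forall>m\<in>{1..N}. expansion eps0 (A m) (hA m) (kA m) (\<delta>A m) (GA m) (epsA m) (a m)"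
  shows "\<forall>n\<in>{1..N}.
    expansion eps0 (\<lambda>\<epsilon>. \<Sum>m=1..n. A m \<epsilon>) (sumB_h n hA) (sumB_k n kA)
       (sumB_delta n kA \<delta>A) (sumB_G n hA kA \<delta>A GA epsA a) (sumB_eps n epsA) (sumB_coef n hA kA a)
    \<and> Min (\<delta>A ` {1..n}) \<le> sumB_delta n kA \<delta>A
    \<and> expansion eps0 (\<lambda>\<epsilon>. \<Prod>m=1..n. A m \<epsilon>) (prodC_h n hA) (prodC_k n hA kA)
       (prodC_delta n hA kA \<delta>A) (prodC_G n hA kA \<delta>A GA epsA a) (prodC_eps n epsA) (prodC_coef n hA kA a)
    \<and> Min (\<delta>A ` {1..n}) \<le> prodC_delta n hA kA \<delta>A
    \<and> (\<forall>\<sigma>. \<sigma> permutes {1..n} \<longrightarrow>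
         sumB_delta n (kA \<circ> \<sigma>) (\<delta>A \<circ> \<sigma>) = sumB_delta n kA \<delta>A
       \<and> sumB_G n (hA \<circ> \<sigma>) (kA \<circ> \<sigma>) (\<delta>A \<circ> \<sigma>) (GA \<circ> \<sigma>) (epsA \<circ> \<sigma>) (a \<circ> \<sigma>)
           = sumB_G n hA kA \<delta>A GA epsA a
       \<and> sumB_eps n (epsA \<circ> \<sigma>) = sumB_eps n epsA
       \<and> prodC_delta n (hA \<circ> \<sigma>) (kA \<circ> \<sigma>) (\<delta>A \<circ> \<sigma>) = prodC_delta n hA kA \<delta>A
       \<and> prodC_G n (hA \<circ> \<sigma>) (kA \<circ> \<sigma>) (\<delta>A \<circ> \<sigma>) (GA \<circ> \<sigma>) (epsA \<circ> \<sigma>) (a \<circ> \<sigma>)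
           = prodC_G n hA kA \<delta>A GA epsA a
       \<and> prodC_eps n (epsA \<circ> \<sigma>) = prodC_eps n epsA)"
proof (intro ballI)
  fix n assume n: "n \<in> {1..N}"
  have ex: "\<forall>m\<in>{1..n}. expansion eps0 (A m) (hA m) (kA m) (\<delta>A m) (GA m) (epsA m) (a m)"
    using assms(4) n by auto
  have n1: "1 \<le> n" using n by auto
  note S = sum_part[OF n1 assms(1) ex]
  note P = prod_part[OF n1 assms(1) ex]
  have Q: "\<forall>\<sigma>. \<sigma> permutes {1..n} \<longrightarrow>
         sumB_delta n (kA \<circ> \<sigma>) (\<delta>A \<circ> \<sigma>) = sumB_delta n kA \<delta>A
       \<and> sumB_G n (hA \<circ> \<sigma>) (kA \<circ> \<sigma>) (\<delta>A \<circ> \<sigma>) (GA \<circ> \<sigma>) (epsA \<circ> \<sigma>) (a \<circ> \<sigma>)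
           = sumB_G n hA kA \<delta>A GA epsA a
       \<and> sumB_eps n (epsA \<circ> \<sigma>) = sumB_eps n epsA
       \<and> prodC_delta n (hA \<circ> \<sigma>) (kA \<circ> \<sigma>) (\<delta>A \<circ> \<sigma>) = prodC_delta n hA kA \<delta>A
       \<and> prodC_G n (hA \<circ> \<sigma>) (kA \<circ> \<sigma>) (\<delta>A \<circ> \<sigma>) (GA \<circ> \<sigma>) (epsA \<circ> \<sigma>) (a \<circ> \<sigma>)
           = prodC_G n hA kA \<delta>A GA epsA a
       \<and> prodC_eps n (epsA \<circ> \<sigma>) = prodC_eps n epsA"
    by (intro allI impI perm_part)
  show "expansion eps0 (\<lambda>\<epsilon>. \<Sum>m=1..n. A m \<epsilon>) (sumB_h n hA) (sumB_k n kA)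
       (sumB_delta n kA \<delta>A) (sumB_G n hA kA \<delta>A GA epsA a) (sumB_eps n epsA) (sumB_coef n hA kA a)
    \<and> Min (\<delta>A ` {1..n}) \<le> sumB_delta n kA \<delta>A
    \<and> expansion eps0 (\<lambda>\<epsilon>. \<Prod>m=1..n. A m \<epsilon>) (prodC_h n hA) (prodC_k n hA kA)
       (prodC_delta n hA kA \<delta>A) (prodC_G n hA kA \<delta>A GA epsA a) (prodC_eps n epsA) (prodC_coef n hA kA a)
    \<and> Min (\<delta>A ` {1..n}) \<le> prodC_delta n hA kA \<delta>A
    \<and> (\<forall>\<sigma>. \<sigma> permutes {1..n} \<longrightarrow>
         sumB_delta n (kA \<circ> \<sigma>) (\<delta>A \<circ> \<sigma>) = sumB_delta n kA \<delta>A
       \<and> sumB_G n (hA \<circ> \<sigma>) (kA \<circ> \<sigma>) (\<delta>A \<circ> \<sigma>) (GA \<circ> \<sigma>) (epsA \<circ> \<sigma>) (a \<circ> \<sigma>)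
           = sumB_G n hA kA \<delta>A GA epsA a
       \<and> sumB_eps n (epsA \<circ> \<sigma>) = sumB_eps n epsA
       \<and> prodC_delta n (hA \<circ> \<sigma>) (kA \<circ> \<sigma>) (\<delta>A \<circ> \<sigma>) = prodC_delta n hA kA \<delta>A
       \<and> prodC_G n (hA \<circ> \<sigma>) (kA \<circ> \<sigma>) (\<delta>A \<circ> \<sigma>) (GA \<circ> \<sigma>) (epsA \<circ> \<sigma>) (a \<circ> \<sigma>)
           = prodC_G n hA kA \<delta>A GA epsA a
       \<and> prodC_eps n (epsA \<circ> \<sigma>) = prodC_eps n epsA)"
    using S P Q by (simp only: conj_assoc)
qed

end
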